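(* Suppose a quantum algorithm $Q$ makes $T$ queries to a Boolean input $X\in\{0,1\}^N$. Then for all $\alpha,\delta>0$, one can approximate $Q$'s acceptance probability to within an additive error $\alpha$, on at least a $1-\delta$ fraction of inputs $X\in\{0,1\}^N$, by a deterministic classical algorithm making $\frac{2^{O(T)}}{\alpha^4\delta^4}$ queries to $X$ (with the constant in $O(T)$ absolute); moreover these classical queries are nonadaptive. *)

theory Defs
  imports Complex_Main
begin

(* The state space has orthonormal basis indexed by k < (N+1)*m, where
  k mod (N+1) is the query register (0 = no query, i+1 = query bit i of X)
  and k div (N+1) is the workspace register (m \<ge> 1 workspace states). *)

definition inputs :: "nat \<Rightarrow> (nat \<Rightarrow> bool) set" where
  "inputs N = {X. \<forall>i\<ge>N. \<not> X i}"

definition is_unitary :: "nat \<Rightarrow> (nat \<Rightarrow> nat \<Rightarrow> complex) \<Rightarrow> bool" where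
  "is_unitary D U \<longleftrightarrow>
     (\<forall>j<D. \<forall>l<D. (\<Sum>k<D. cnj (U k j) * U k l) = (if j = l then 1 else 0))"

definition mat_apply :: "nat \<Rightarrow> (nat \<Rightarrow> nat \<Rightarrow> complex) \<Rightarrow> (nat \<Rightarrow> complex) \<Rightarrow> (nat \<Rightarrow> complex)" where
  "mat_apply D U v = (\<lambda>j. \<Sum>k<D. U j k * v k)"

definition phase_query :: "nat \<Rightarrow> (nat \<Rightarrow> bool) \<Rightarrow> (nat \<Rightarrow> complex) \<Rightarrow> (nat \<Rightarrow> complex)" where
  "phase_query N X v = (\<lambda>k. (if k mod (N + 1) = 0 then 1
                        else if X (k mod (N + 1) - 1) then -1 else 1) * v k)"

primrec qstate :: "nat \<Rightarrow> nat \<Rightarrow> (nat \<Rightarrow> nat \<Rightarrow> nat \<Rightarrow> complex) \<Rightarrow> (nat \<Rightarrow> bool) \<Rightarrow> nat \<Rightarrow> (nat \<Rightarrow> complex)" where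
  "qstate N m U X 0 = mat_apply ((N + 1) * m) (U 0) (\<lambda>k. if k = 0 then 1 else 0)"
| "qstate N m U X (Suc t) = mat_apply ((N + 1) * m) (U (Suc t)) (phase_query N X (qstate N m U X t))"

definition acc_prob :: "nat \<Rightarrow> nat \<Rightarrow> (nat \<Rightarrow> nat \<Rightarrow> nat \<Rightarrow> complex) \<Rightarrow> nat set \<Rightarrow> nat \<Rightarrow> (nat \<Rightarrow> bool) \<Rightarrow> real" where
  "acc_prob N m U Acc T X = (\<Sum>k\<in>Acc. (cmod (qstate N m U X T k))\<^sup>2)"

definition quantum_query_alg :: "nat \<Rightarrow> nat \<Rightarrow> (nat \<Rightarrow> nat \<Rightarrow> nat \<Rightarrow> complex) \<Rightarrow> nat set \<Rightarrow> nat \<Rightarrow> bool" where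
  "quantum_query_alg N m U Acc T \<longleftrightarrow>
     0 < m \<and> (\<forall>t\<le>T. is_unitary ((N + 1) * m) (U t)) \<and> Acc \<subseteq> {..<(N + 1) * m}"

definition nonadaptive_alg :: "nat \<Rightarrow> nat set \<Rightarrow> ((nat \<Rightarrow> bool) \<Rightarrow> real) \<Rightarrow> bool" where
  "nonadaptive_alg N S g \<longleftrightarrow>
     S \<subseteq> {..<N} \<and> (\<forall>X Y. (\<forall>i\<in>S. X i = Y i) \<longrightarrow> g X = g Y)"

end

theory Submission
  imports Defs "HOL-Computational_Algebra.Polynomial" "HOL-Analysis.Convex"
begin

definition nd :: "nat \<Rightarrow> nat \<Rightarrow> real" where "nd d m = real m / real d"
definition lprod :: "nat \<Rightarrow> nat \<Rightarrow> real poly" where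
  "lprod d m = (\<Prod>l\<in>{0..d}-{m}. [:- nd d l, 1:])"
definition den :: "nat \<Rightarrow> nat \<Rightarrow> real" where
  "den d m = (\<Prod>l\<in>{0..d}-{m}. (nd d m - nd d l))"

lemma nd_inj: "0 < d \<Longrightarrow> nd d a = nd d b \<longleftrightarrow> a = b"
  by (auto simp: nd_def divide_simps)

lemma poly_lprod: "poly (lprod d m) x = (\<Prod>l\<in>{0..d}-{m}. (x - nd d l))"
  by (simp add: lprod_def poly_prod)

lemma den_nz: "0 < d \<Longrightarrow> den d m \<noteq> 0"
  by (auto simp: den_def nd_inj)

lemma degree_lprod: assumes "m \<le> d" shows "degree (lprod d m) \<le> d"
proof -
  have "degree (lprod d m) \<le> sum (degree \<circ> (\<lambda>l. [:- nd d l, 1:])) ({0..d}-{m})"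
    unfolding lprod_def by (rule degree_prod_sum_le) auto
  also have "\<dots> \<le> card ({0..d}-{m})" by simp
  also have "\<dots> \<le> d" using assms by auto
  finally show ?thesis .
qed

lemma interp:
  fixes P :: "real poly"
  assumes d: "0 < d" and deg: "degree P \<le> d"
  shows "P = (\<Sum>m\<in>{0..d}. smult (poly P (nd d m) / den d m) (lprod d m))" (is "P = ?Q")
proof (rule ccontr)
  assume ne: "P \<noteq> ?Q"
  have degQ: "degree ?Q \<le> d"
    by (rule degree_sum_le) (simp, metis atLeastAtMost_iff degree_lprod degree_smult_le order.trans)
  have "degree (P - ?Q) \<le> d" using deg degQ degree_diff_le by blast
  have roots: "nd d ` {0..d} \<subseteq> {x. poly (P - ?Q) x = 0}"
  proof
    fix x assume "x \<in> nd d ` {0..d}"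
    then obtain j where j: "j \<in> {0..d}" "x = nd d j" by auto
    have "poly ?Q x = (\<Sum>m\<in>{0..d}. poly P (nd d m) / den d m * poly (lprod d m) x)"
      by (simp add: poly_sum)
    also have "\<dots> = (\<Sum>m\<in>{0..d}. if m = j then poly P x else 0)"
    proof (rule sum.cong[OF refl])
      fix m assume m: "m \<in> {0..d}"
      show "poly P (nd d m) / den d m * poly (lprod d m) x = (if m = j then poly P x else 0)"
      proof (cases "m = j")
        case True
        then show ?thesis using j den_nz[OF d, of m] by (simp add: poly_lprod den_def)
      next
        case False
        have "poly (lprod d m) x = 0" unfolding poly_lprod using j False
          by (intro prod_zero) auto
        then show ?thesis using False by simp
      qed
    qed
    also have "\<dots> = poly P x" using j by simp
    finally show "x \<in> {x. poly (P - ?Q) x = 0}" by simp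
  qed
  have c1: "card (nd d ` {0..d}) = d + 1"
    by (subst card_image) (auto simp: inj_on_def nd_inj[OF d])
  have "card (nd d ` {0..d}) \<le> card {x. poly (P - ?Q) x = 0}"
    using roots ne by (intro card_mono poly_roots_finite) auto
  also have "\<dots> \<le> degree (P - ?Q)" using ne by (intro card_poly_roots_bound) auto
  finally show False using \<open>degree (P - ?Q) \<le> d\<close> c1 by simp
qed

lemma pderiv_lprod_bound:
  assumes d: "0 < d" and md: "m \<le> d"
  shows "\<bar>poly (pderiv (lprod d m)) 1\<bar> \<le> real d"
proof -
  have "poly (pderiv (lprod d m)) 1 =
      (\<Sum>a\<in>{0..d}-{m}. (\<Prod>l\<in>{0..d}-{m}-{a}. (1 - nd d l)))"
    unfolding lprod_def pderiv_prod by (simp add: poly_sum poly_prod pderiv_pCons)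
  also have "\<bar>\<dots>\<bar> \<le> (\<Sum>a\<in>{0..d}-{m}. (1::real))"
  proof -
    have "\<And>a. 0 \<le> (\<Prod>l\<in>{0..d}-{m}-{a}. (1 - nd d l)) \<and> (\<Prod>l\<in>{0..d}-{m}-{a}. (1 - nd d l)) \<le> 1"
    proof -
      fix a
      have h: "\<And>l. l \<in> {0..d}-{m}-{a} \<Longrightarrow> 0 \<le> 1 - nd d l \<and> 1 - nd d l \<le> 1"
        using d by (auto simp: nd_def divide_simps)
      show "?thesis a"
      proof
        show "0 \<le> (\<Prod>l\<in>{0..d}-{m}-{a}. (1 - nd d l))" by (rule prod_nonneg) (use h in blast)
        show "(\<Prod>l\<in>{0..d}-{m}-{a}. (1 - nd d l)) \<le> 1" by (rule prod_le_1) (use h in blast)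
      qed
    qed
    then show ?thesis by (intro order.trans[OF sum_abs] sum_mono) auto
  qed
  also have "\<dots> \<le> real d" using md by auto
  finally show ?thesis .
qed

lemma prod_lower_fact: "(\<Prod>l<m. (real m - real l)) = fact m"
proof (induction m)
  case 0 then show ?case by simp
next
  case (Suc m)
  have "(\<Prod>l<Suc m. (real (Suc m) - real l)) = real (Suc m) * (\<Prod>l<m. (real (Suc m) - real (Suc l)))"
    by (subst prod.lessThan_Suc_shift) simp
  also have "\<dots> = real (Suc m) * fact m" using Suc by simp
  finally show ?case by (simp add: fact_Suc)
qed

lemma prod_upper_fact: "(\<Prod>l\<in>{Suc m..m+k}. (real l - real m)) = fact k"
proof (induction k)
  case 0 then show ?case by simp
next
  case (Suc k)
  have "{Suc m..m + Suc k} = insert (m + Suc k) {Suc m..m+k}" by auto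
  then have "(\<Prod>l\<in>{Suc m..m+Suc k}. (real l - real m)) = (real (Suc k)) * (\<Prod>l\<in>{Suc m..m+k}. (real l - real m))"
    by simp
  then show ?case using Suc by (simp add: fact_Suc)
qed

lemma abs_den:
  assumes d: "0 < d" and m: "m \<le> d"
  shows "\<bar>den d m\<bar> = fact m * fact (d - m) / real d ^ d"
proof -
  have split: "{0..d}-{m} = {..<m} \<union> {Suc m..m + (d-m)}" using m by auto
  have "\<bar>den d m\<bar> = (\<Prod>l\<in>{0..d}-{m}. \<bar>real m - real l\<bar> / real d)"
    unfolding den_def nd_def abs_prod by (intro prod.cong) (auto simp: diff_divide_distrib[symmetric])
  also have "\<dots> = (\<Prod>l\<in>{0..d}-{m}. \<bar>real m - real l\<bar>) / real d ^ card ({0..d}-{m})"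
    by (simp add: prod_dividef)
  also have "card ({0..d}-{m}) = d" using m by simp
  also have "(\<Prod>l\<in>{0..d}-{m}. \<bar>real m - real l\<bar>) =
     (\<Prod>l<m. \<bar>real m - real l\<bar>) * (\<Prod>l\<in>{Suc m..m+(d-m)}. \<bar>real m - real l\<bar>)"
    unfolding split by (rule prod.union_disjoint) auto
  also have "(\<Prod>l<m. \<bar>real m - real l\<bar>) = (\<Prod>l<m. (real m - real l))" by (intro prod.cong) auto
  also have "(\<Prod>l\<in>{Suc m..m+(d-m)}. \<bar>real m - real l\<bar>) = (\<Prod>l\<in>{Suc m..m+(d-m)}. (real l - real m))"
    by (intro prod.cong) auto
  finally show ?thesis by (simp add: prod_lower_fact prod_upper_fact)
qed

lemma pow_le_fact: "real d ^ d \<le> 3 ^ d * fact d"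
proof (induction d)
  case 0 then show ?case by simp
next
  case (Suc d)
  show ?case
  proof (cases "d = 0")
    case True then show ?thesis by simp
  next
    case False
    have "(1 + 1 / real d) ^ d \<le> exp 1" using False by (intro exp_ge_one_plus_x_over_n_power_n) auto
    also have "exp (1::real) \<le> 3" using exp_le by simp
    finally have e: "(1 + 1 / real d) ^ d \<le> 3" .
    have "real (Suc d) ^ d = real d ^ d * (1 + 1 / real d) ^ d"
      using False by (simp add: power_mult_distrib[symmetric] field_simps)
    also have "\<dots> \<le> (3 ^ d * fact d) * 3"
      using Suc e by (intro mult_mono) auto
    finally have "real (Suc d) ^ Suc d \<le> real (Suc d) * ((3 ^ d * fact d) * 3)"
      by (simp del: of_nat_Suc)
    then show ?thesis by (simp add: fact_Suc algebra_simps)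
  qed
qed

lemma markov_crude:
  fixes P :: "real poly"
  assumes deg: "degree P \<le> d" and bnd: "\<And>t. 0 \<le> t \<Longrightarrow> t \<le> 1 \<Longrightarrow> \<bar>poly P t\<bar> \<le> M"
  shows "\<bar>poly (pderiv P) 1\<bar> \<le> M * real d * 6 ^ d"
proof (cases "d = 0")
  case True
  then have "pderiv P = 0" using deg by (simp add: pderiv_eq_0_iff)
  then show ?thesis using True by simp
next
  case False
  then have d: "0 < d" by simp
  have M0: "0 \<le> M" using bnd[of 0] by simp
  have "pderiv P = (\<Sum>m\<in>{0..d}. smult (poly P (nd d m) / den d m) (pderiv (lprod d m)))"
    by (subst interp[OF d deg]) (simp add: higher_pderiv_sum[of 1, simplified] pderiv_smult)
  then have "poly (pderiv P) 1 = (\<Sum>m\<in>{0..d}. poly P (nd d m) / den d m * poly (pderiv (lprod d m)) 1)"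
    by (simp add: poly_sum)
  also have "\<bar>\<dots>\<bar> \<le> (\<Sum>m\<in>{0..d}. M * (real d ^ d / (fact m * fact (d - m))) * real d)"
  proof (intro order.trans[OF sum_abs] sum_mono)
    fix m assume m: "m \<in> {0..d}"
    have "\<bar>poly P (nd d m)\<bar> \<le> M" using m d by (intro bnd) (auto simp: nd_def divide_simps)
    moreover have "1 / \<bar>den d m\<bar> = real d ^ d / (fact m * fact (d - m))"
      using abs_den[OF d] m by simp
    ultimately have "\<bar>poly P (nd d m) / den d m\<bar> \<le> M * (real d ^ d / (fact m * fact (d - m)))"
      by (metis abs_divide divide_right_mono mult_1_right times_divide_eq_right abs_ge_zero)
    then show "\<bar>poly P (nd d m) / den d m * poly (pderiv (lprod d m)) 1\<bar> \<le> M * (real d ^ d / (fact m * fact (d - m))) * real d"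
      unfolding abs_mult using pderiv_lprod_bound[OF d, of m] M0 m
      by (intro mult_mono) auto
  qed
  also have "\<dots> = M * real d * (real d ^ d / fact d) * (\<Sum>m\<in>{0..d}. real (d choose m))"
    by (simp add: sum_distrib_left binomial_fact field_simps)
  also have "(\<Sum>m\<in>{0..d}. real (d choose m)) = 2 ^ d"
    using choose_row_sum[of d] by (simp add: atMost_atLeast0 flip: of_nat_sum)
  also have "M * real d * (real d ^ d / fact d) * 2 ^ d \<le> M * real d * 3 ^ d * 2 ^ d"
    using pow_le_fact[of d] M0 by (intro mult_right_mono mult_left_mono) (auto simp: divide_simps)
  also have "\<dots> = M * real d * 6 ^ d" by (simp add: power_mult_distrib[symmetric])
  finally show ?thesis .
qed

definition sg :: "bool \<Rightarrow> 'a::comm_ring_1" where "sg b = (if b then -1 else 1)"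

lemma sg_sq[simp]: "sg b * sg b = 1" by (simp add: sg_def)
lemma sg_simps[simp]: "sg True = -1" "sg False = 1" by (simp_all add: sg_def)

fun ld :: "nat \<Rightarrow> int \<Rightarrow> ((nat \<Rightarrow> bool) \<Rightarrow> 'a::comm_ring_1) \<Rightarrow> bool" where
  "ld 0 k g = (\<exists>c. g = (\<lambda>_. c) \<and> (k < 0 \<longrightarrow> c = 0))"
| "ld (Suc n) k g = (\<exists>h0 h1. ld n k h0 \<and> ld n (k - 1) h1 \<and> g = (\<lambda>X. h0 X + sg (X n) * h1 X))"

lemma ld_SucI: "ld n k h0 \<Longrightarrow> ld n (k - 1) h1 \<Longrightarrow> g = (\<lambda>X. h0 X + sg (X n) * h1 X) \<Longrightarrow> ld (Suc n) k g"
  by auto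

lemma ld_zero: "ld n k (\<lambda>_. 0)"
proof (induction n arbitrary: k)
  case (Suc n) show ?case by (rule ld_SucI[of n k "\<lambda>_. 0" "\<lambda>_. 0"]) (auto intro: Suc)
qed auto

lemma ld_const: "0 \<le> k \<Longrightarrow> ld n k (\<lambda>_. c)"
proof (induction n arbitrary: k)
  case 0 then show ?case by auto
next
  case (Suc n) then show ?case by (intro ld_SucI[of n k "\<lambda>_. c" "\<lambda>_. 0"]) (auto intro: ld_zero)
qed

lemma ld_neg: "ld n k g \<Longrightarrow> k < 0 \<Longrightarrow> g = (\<lambda>_. 0)"
proof (induction n arbitrary: k g)
  case 0 then show ?case by auto
next
  case (Suc n)
  then obtain h0 h1 where "ld n k h0" "ld n (k - 1) h1" "g = (\<lambda>X. h0 X + sg (X n) * h1 X)" by auto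
  with Suc.IH[of k h0] Suc.IH[of "k-1" h1] Suc.prems show ?case by auto
qed

lemma ld_mono: "ld n k g \<Longrightarrow> k \<le> k' \<Longrightarrow> ld n k' g"
proof (induction n arbitrary: k k' g)
  case 0 then show ?case by auto
next
  case (Suc n)
  then obtain h0 h1 where "ld n k h0" "ld n (k - 1) h1" "g = (\<lambda>X. h0 X + sg (X n) * h1 X)" by auto
  with Suc.IH[of k h0 k'] Suc.IH[of "k-1" h1 "k'-1"] Suc.prems show ?case by auto
qed

lemma ld_add: "ld n k f \<Longrightarrow> ld n k g \<Longrightarrow> ld n k (\<lambda>X. f X + g X)"
proof (induction n arbitrary: k f g)
  case 0 then show ?case by auto
next
  case (Suc n)
  obtain h0 h1 where h: "ld n k h0" "ld n (k - 1) h1" "f = (\<lambda>X. h0 X + sg (X n) * h1 X)"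
    using Suc.prems(1) by auto
  obtain e0 e1 where e: "ld n k e0" "ld n (k - 1) e1" "g = (\<lambda>X. e0 X + sg (X n) * e1 X)"
    using Suc.prems(2) by auto
  show ?case
    by (rule ld_SucI[of n k "\<lambda>X. h0 X + e0 X" "\<lambda>X. h1 X + e1 X"])
      (auto intro!: Suc.IH h e simp: h(3) e(3) algebra_simps)
qed

lemma ld_cmult: "ld n k f \<Longrightarrow> ld n k (\<lambda>X. c * f X)"
proof (induction n arbitrary: k f)
  case 0 then show ?case by auto
next
  case (Suc n)
  obtain h0 h1 where h: "ld n k h0" "ld n (k - 1) h1" "f = (\<lambda>X. h0 X + sg (X n) * h1 X)"
    using Suc.prems(1) by auto
  show ?case
    by (rule ld_SucI[of n k "\<lambda>X. c * h0 X" "\<lambda>X. c * h1 X"])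
      (auto intro!: Suc.IH h simp: h(3) algebra_simps)
qed

lemma ld_uminus: "ld n k f \<Longrightarrow> ld n k (\<lambda>X. - f X)"
  using ld_cmult[of n k f "-1"] by simp

lemma ld_diff: "ld n k f \<Longrightarrow> ld n k g \<Longrightarrow> ld n k (\<lambda>X. f X - g X)"
  using ld_add[of n k f "\<lambda>X. - g X"] ld_uminus[of n k g] by simp

lemma ld_sum: "finite A \<Longrightarrow> (\<And>a. a \<in> A \<Longrightarrow> ld n k (f a)) \<Longrightarrow> ld n k (\<lambda>X. \<Sum>a\<in>A. f a X)"
proof (induction A rule: finite_induct)
  case empty then show ?case by (simp add: ld_zero)
next
  case (insert x F) then show ?case by (simp add: ld_add)
qed

lemma ld_mult: "ld n k f \<Longrightarrow> ld n l g \<Longrightarrow> ld n (k + l) (\<lambda>X. f X * g X)"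
proof (induction n arbitrary: k l f g)
  case 0 then show ?case by auto
next
  case (Suc n)
  obtain h0 h1 where h: "ld n k h0" "ld n (k - 1) h1" "f = (\<lambda>X. h0 X + sg (X n) * h1 X)"
    using Suc.prems(1) by auto
  obtain e0 e1 where e: "ld n l e0" "ld n (l - 1) e1" "g = (\<lambda>X. e0 X + sg (X n) * e1 X)"
    using Suc.prems(2) by auto
  have 1: "ld n (k + l) (\<lambda>X. h0 X * e0 X + h1 X * e1 X)"
    by (intro ld_add Suc.IH h e ld_mono[OF Suc.IH[OF h(2) e(2)]]) simp
  have 2: "ld n (k + l - 1) (\<lambda>X. h0 X * e1 X + h1 X * e0 X)"
  proof (intro ld_add)
    show "ld n (k + l - 1) (\<lambda>X. h0 X * e1 X)" using Suc.IH[OF h(1) e(2)] by (simp add: algebra_simps)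
    show "ld n (k + l - 1) (\<lambda>X. h1 X * e0 X)" using Suc.IH[OF h(2) e(1)] by (simp add: algebra_simps)
  qed
  have eq: "(\<lambda>X. f X * g X) = (\<lambda>X. (h0 X * e0 X + h1 X * e1 X) + sg (X n) * (h0 X * e1 X + h1 X * e0 X))"
  proof
    fix X
    have "f X * g X = h0 X * e0 X + (sg (X n) * sg (X n)) * (h1 X * e1 X) + sg (X n) * (h0 X * e1 X + h1 X * e0 X)"
      unfolding h(3) e(3) by (simp add: algebra_simps)
    then show "f X * g X = (h0 X * e0 X + h1 X * e1 X) + sg (X n) * (h0 X * e1 X + h1 X * e0 X)" by simp
  qed
  show ?case unfolding eq using 1 2 by auto
qed

lemma ld_indep: "ld n k g \<Longrightarrow> (\<forall>j<n. X j = Y j) \<Longrightarrow> g X = g Y"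
proof (induction n arbitrary: k g)
  case 0 then show ?case by auto
next
  case (Suc n)
  obtain h0 h1 where h: "ld n k h0" "ld n (k - 1) h1" "g = (\<lambda>X. h0 X + sg (X n) * h1 X)"
    using Suc.prems(1) by auto
  show ?case using Suc.IH[OF h(1)] Suc.IH[OF h(2)] Suc.prems(2) h(3) by auto
qed

lemma ld_indep_upd: "ld n k g \<Longrightarrow> n \<le> j \<Longrightarrow> g (X(j := b)) = g X"
  by (erule ld_indep) auto

lemma ld_var: "i < n \<Longrightarrow> ld n 1 (\<lambda>X. sg (X i) :: 'a::comm_ring_1)"
proof (induction n)
  case 0 then show ?case by simp
next
  case (Suc n)
  show ?case
  proof (cases "i = n")
    case True
    then show ?thesis
      by (intro ld_SucI[of n 1 "\<lambda>_. 0" "\<lambda>_. 1"]) (auto intro: ld_zero ld_const)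
  next
    case False
    then have "ld n 1 (\<lambda>X. sg (X i) :: 'a)" using Suc by simp
    then show ?thesis by (intro ld_SucI[of n 1 "\<lambda>X. sg (X i)" "\<lambda>_. 0"]) (auto intro: ld_zero)
  qed
qed

lemma ld_upd: "ld n k g \<Longrightarrow> ld n k (\<lambda>X. g (X(i := b)))"
proof (induction n arbitrary: k g)
  case 0 then show ?case by auto
next
  case (Suc n)
  obtain h0 h1 where h: "ld n k h0" "ld n (k - 1) h1" "g = (\<lambda>X. h0 X + sg (X n) * h1 X)"
    using Suc.prems(1) by auto
  show ?case
  proof (cases "i = n")
    case True
    have eq: "(\<lambda>X. g (X(i := b))) = (\<lambda>X. (h0 X + sg b * h1 X) + sg (X n) * 0)"
      using h True ld_indep_upd[OF h(1), of n] ld_indep_upd[OF h(2), of n] by auto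
    have l: "ld n k (\<lambda>X. h0 X + sg b * h1 X)"
      by (intro ld_add h(1) ld_cmult ld_mono[OF h(2)]) simp
    show ?thesis by (rule ld_SucI[OF l ld_zero eq])
  next
    case False
    have eq: "(\<lambda>X. g (X(i := b))) = (\<lambda>X. h0 (X(i:=b)) + sg (X n) * h1 (X(i:=b)))"
      using h False by auto
    show ?thesis by (rule ld_SucI[OF Suc.IH[OF h(1)] Suc.IH[OF h(2)] eq])
  qed
qed

lemma ld_Re: "ld n k (g :: (nat \<Rightarrow> bool) \<Rightarrow> complex) \<Longrightarrow> ld n k (\<lambda>X. Re (g X))"
proof (induction n arbitrary: k g)
  case 0 then show ?case by auto
next
  case (Suc n)
  obtain h0 h1 where h: "ld n k h0" "ld n (k - 1) h1" "g = (\<lambda>X. h0 X + sg (X n) * h1 X)"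
    using Suc.prems(1) by auto
  have "(\<lambda>X. Re (g X)) = (\<lambda>X. Re (h0 X) + sg (X n) * Re (h1 X))"
    using h(3) by (auto simp: sg_def)
  then show ?case using Suc.IH[OF h(1)] Suc.IH[OF h(2)] by fastforce
qed

lemma ld_cnj: "ld n k (g :: (nat \<Rightarrow> bool) \<Rightarrow> complex) \<Longrightarrow> ld n k (\<lambda>X. cnj (g X))"
proof (induction n arbitrary: k g)
  case 0 then show ?case by auto
next
  case (Suc n)
  obtain h0 h1 where h: "ld n k h0" "ld n (k - 1) h1" "g = (\<lambda>X. h0 X + sg (X n) * h1 X)"
    using Suc.prems(1) by auto
  have "(\<lambda>X. cnj (g X)) = (\<lambda>X. cnj (h0 X) + sg (X n) * cnj (h1 X))"
    using h(3) by (auto simp: sg_def)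
  then show ?case using Suc.IH[OF h(1)] Suc.IH[OF h(2)] by fastforce
qed

lemma inputs_0: "inputs 0 = {\<lambda>_. False}"
  by (auto simp: inputs_def)

lemma inputs_Suc: "inputs (Suc n) = inputs n \<union> (\<lambda>X. X(n := True)) ` inputs n"
proof
  show "inputs (Suc n) \<subseteq> inputs n \<union> (\<lambda>X. X(n := True)) ` inputs n"
  proof
    fix X assume X: "X \<in> inputs (Suc n)"
    have Xn: "X (n := False) \<in> inputs n"
      unfolding inputs_def
    proof (intro CollectI allI impI)
      fix i assume "n \<le> i"
      show "\<not> (X(n := False)) i"
      proof (cases "i = n")
        case False
        then have "Suc n \<le> i" using \<open>n \<le> i\<close> by simp
        then show ?thesis using X False unfolding inputs_def by simp
      qed simp
    qed
    show "X \<in> inputs n \<union> (\<lambda>X. X(n := True)) ` inputs n"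
    proof (cases "X n")
      case True
      then have "X = (X(n := False))(n := True)" by (intro ext) simp
      then show ?thesis using Xn by blast
    next
      case False
      then have "X = X(n := False)" by (intro ext) simp
      then show ?thesis using Xn by simp
    qed
  qed
  show "inputs n \<union> (\<lambda>X. X(n := True)) ` inputs n \<subseteq> inputs (Suc n)"
    unfolding inputs_def by auto
qed

lemma inputs_n_false: "X \<in> inputs n \<Longrightarrow> X n = False"
  by (auto simp: inputs_def)

lemma finite_inputs: "finite (inputs n)"
proof (induction n)
  case 0 show ?case unfolding inputs_0 by simp
next
  case (Suc n) show ?case unfolding inputs_Suc using Suc by simp
qed

lemma sum_inputs_Suc:
  "(\<Sum>X\<in>inputs (Suc n). \<phi> X) = (\<Sum>X\<in>inputs n. \<phi> X + \<phi> (X(n := True)))"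
proof -
  have disj: "inputs n \<inter> (\<lambda>X. X(n := True)) ` inputs n = {}"
    using inputs_n_false by fastforce
  have inj: "inj_on (\<lambda>X. X(n := True)) (inputs n)"
  proof (rule inj_onI)
    fix X Y assume "X \<in> inputs n" "Y \<in> inputs n" "X(n := True) = Y(n := True)"
    then show "X = Y"
    proof (intro ext)
      fix i assume a: "X \<in> inputs n" "Y \<in> inputs n" "X(n := True) = Y(n := True)"
      show "X i = Y i"
      proof (cases "i = n")
        case True then show ?thesis using inputs_n_false[OF a(1)] inputs_n_false[OF a(2)] by simp
      next
        case False then show ?thesis using fun_cong[OF a(3), of i] by simp
      qed
    qed
  qed
  have "(\<Sum>X\<in>inputs (Suc n). \<phi> X) = (\<Sum>X\<in>inputs n. \<phi> X) + (\<Sum>X\<in>(\<lambda>X. X(n := True)) ` inputs n. \<phi> X)"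
    unfolding inputs_Suc by (rule sum.union_disjoint) (auto simp: finite_inputs disj)
  also have "(\<Sum>X\<in>(\<lambda>X. X(n := True)) ` inputs n. \<phi> X) = (\<Sum>X\<in>inputs n. \<phi> (X(n := True)))"
    by (rule sum.reindex_cong[OF inj refl refl])
  finally show ?thesis by (simp add: sum.distrib)
qed

lemma card_inputs: "card (inputs n) = 2 ^ n"
proof (induction n)
  case 0 then show ?case by (simp add: inputs_0)
next
  case (Suc n)
  have "card (inputs (Suc n)) = (\<Sum>X\<in>inputs (Suc n). 1)" by simp
  also have "\<dots> = (\<Sum>X\<in>inputs n. 2)" by (subst sum_inputs_Suc) simp
  also have "\<dots> = 2 * 2 ^ n" using Suc by simp
  finally show ?case by simp
qed

lemma bs_a1: fixes M A B :: real shows "M * A\<^sup>2 * (M / 9 * B\<^sup>2) = (M * A * B / 3)\<^sup>2"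
  by (simp add: power2_eq_square)
lemma bs_a2: fixes M A B :: real shows "M * (A + B)\<^sup>2 = M * A\<^sup>2 + 2 * (M * A * B) + M * B\<^sup>2"
  by (simp add: power2_eq_square distrib_left distrib_right mult_ac)
lemma bs_a3: fixes n R P Q :: real assumes "0 \<le> n" "R\<^sup>2 \<le> P * Q" shows "(n * R)\<^sup>2 \<le> (n * P) * (n * Q)"
proof -
  have "(n * R)\<^sup>2 = n\<^sup>2 * R\<^sup>2" by (simp add: power_mult_distrib)
  also have "\<dots> \<le> n\<^sup>2 * (P * Q)" using assms by (intro mult_left_mono) auto
  also have "\<dots> = (n * P) * (n * Q)" by (simp add: power2_eq_square mult_ac)
  finally show ?thesis .
qed

lemma bonami_step:
  fixes M A B P Q R n :: real
  assumes A0: "0 \<le> A" "0 \<le> B" "0 \<le> P" "0 \<le> Q" "0 \<le> R" "1 \<le> M" "0 < n"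
  and IHA: "n * P \<le> M * A\<^sup>2" and IHB: "n * Q \<le> M / 9 * B\<^sup>2" and CS: "R\<^sup>2 \<le> P * Q"
  shows "n * (P + 6 * R + Q) \<le> M * (A + B)\<^sup>2"
proof -
  have "(n * R)\<^sup>2 \<le> (n * P) * (n * Q)" using A0 CS by (intro bs_a3) auto
  also have "\<dots> \<le> (M * A\<^sup>2) * (M / 9 * B\<^sup>2)"
    by (rule mult_mono) (use IHA IHB A0 in auto)
  also have "\<dots> = (M * A * B / 3)\<^sup>2" by (rule bs_a1)
  finally have sq: "(n * R)\<^sup>2 \<le> (M * A * B / 3)\<^sup>2" .
  have nR: "n * R \<le> M * A * B / 3"
    by (rule power2_le_imp_le[OF sq]) (use A0 in simp)
  have mb: "M / 9 * B\<^sup>2 \<le> M * B\<^sup>2" using A0 by (intro mult_right_mono) auto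
  have ex: "n * (P + 6 * R + Q) = n * P + 6 * (n * R) + n * Q" by (simp add: distrib_left)
  show ?thesis unfolding bs_a2 ex using IHA IHB nR mb by linarith
qed

lemma bonami:
  fixes g :: "(nat \<Rightarrow> bool) \<Rightarrow> real"
  assumes "ld n k g"
  shows "2 ^ n * (\<Sum>X\<in>inputs n. (g X) ^ 4) \<le> 9 ^ (nat k) * (\<Sum>X\<in>inputs n. (g X)\<^sup>2)\<^sup>2"
  using assms
proof (induction n arbitrary: k g)
  case 0
  then obtain c where c: "g = (\<lambda>_. c)" by auto
  have "1 \<le> (9::real) ^ nat k" by simp
  from mult_right_mono[OF this, of "(c\<^sup>2)\<^sup>2"]
  have "c ^ 4 \<le> 9 ^ nat k * (c\<^sup>2)\<^sup>2" by (simp flip: power_mult)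
  then show ?case by (simp add: c inputs_0)
next
  case (Suc n)
  obtain h0 h1 where h: "ld n k h0" "ld n (k - 1) h1" "g = (\<lambda>X. h0 X + sg (X n) * h1 X)"
    using Suc.prems(1) by auto
  define M :: real where "M = 9 ^ nat k"
  define A where "A = (\<Sum>X\<in>inputs n. (h0 X)\<^sup>2)"
  define B where "B = (\<Sum>X\<in>inputs n. (h1 X)\<^sup>2)"
  define P where "P = (\<Sum>X\<in>inputs n. (h0 X) ^ 4)"
  define Q where "Q = (\<Sum>X\<in>inputs n. (h1 X) ^ 4)"
  define R where "R = (\<Sum>X\<in>inputs n. (h0 X)\<^sup>2 * (h1 X)\<^sup>2)"
  have gX: "\<And>X. X \<in> inputs n \<Longrightarrow> g X = h0 X + h1 X \<and> g (X(n := True)) = h0 X - h1 X"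
  proof -
    fix X assume "X \<in> inputs n"
    then have "X n = False" by (rule inputs_n_false)
    then show "g X = h0 X + h1 X \<and> g (X(n := True)) = h0 X - h1 X"
      by (simp add: h(3) ld_indep_upd[OF h(1)] ld_indep_upd[OF h(2)])
  qed
  have p4: "\<And>a b::real. (a + b) ^ 4 + (a - b) ^ 4 = 2 * a ^ 4 + 12 * (a\<^sup>2 * b\<^sup>2) + 2 * b ^ 4"
    by (simp add: power4_eq_xxxx power2_eq_square algebra_simps)
  have p2: "\<And>a b::real. (a + b)\<^sup>2 + (a - b)\<^sup>2 = 2 * a\<^sup>2 + 2 * b\<^sup>2"
    by (simp add: power2_eq_square algebra_simps)
  have "(\<Sum>X\<in>inputs (Suc n). (g X) ^ 4) = (\<Sum>X\<in>inputs n. 2 * (h0 X) ^ 4 + 12 * ((h0 X)\<^sup>2 * (h1 X)\<^sup>2) + 2 * (h1 X) ^ 4)"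
    unfolding sum_inputs_Suc by (rule sum.cong[OF refl]) (simp only: gX p4)
  also have "\<dots> = 2 * P + 12 * R + 2 * Q"
    unfolding P_def Q_def R_def by (simp add: sum.distrib sum_distrib_left)
  finally have S4: "(\<Sum>X\<in>inputs (Suc n). (g X) ^ 4) = 2 * P + 12 * R + 2 * Q" .
  have "(\<Sum>X\<in>inputs (Suc n). (g X)\<^sup>2) = (\<Sum>X\<in>inputs n. 2 * (h0 X)\<^sup>2 + 2 * (h1 X)\<^sup>2)"
    unfolding sum_inputs_Suc by (rule sum.cong[OF refl]) (simp only: gX p2)
  also have "\<dots> = 2 * A + 2 * B"
    unfolding A_def B_def by (simp add: sum.distrib sum_distrib_left)
  finally have S2: "(\<Sum>X\<in>inputs (Suc n). (g X)\<^sup>2) = 2 * A + 2 * B" .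
  have A0: "0 \<le> A" "0 \<le> B" "0 \<le> P" "0 \<le> Q" "0 \<le> R" "1 \<le> M"
    unfolding A_def B_def P_def Q_def R_def M_def
    by (simp_all add: sum_nonneg zero_le_even_power)
  have IHA: "2 ^ n * P \<le> M * A\<^sup>2" using Suc.IH[OF h(1)] by (simp add: P_def A_def M_def)
  have key: "2 ^ n * (P + 6 * R + Q) \<le> M * (A + B)\<^sup>2"
  proof (cases "k \<le> 0")
    case True
    then have "h1 = (\<lambda>_. 0)" using ld_neg[OF h(2)] by simp
    then have "B = 0" "Q = 0" "R = 0" by (simp_all add: B_def Q_def R_def)
    then show ?thesis using IHA by simp
  next
    case False
    then have "nat k = Suc (nat (k - 1))" by simp
    then have Mk: "9 ^ nat (k - 1) = M / 9" unfolding M_def by simp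
    have IHB: "2 ^ n * Q \<le> M / 9 * B\<^sup>2" using Suc.IH[OF h(2)] Mk by (simp add: Q_def B_def)
    have CS: "R\<^sup>2 \<le> P * Q"
      using Cauchy_Schwarz_ineq_sum[of "\<lambda>X. (h0 X)\<^sup>2" "\<lambda>X. (h1 X)\<^sup>2" "inputs n"]
      unfolding R_def P_def Q_def by (simp add: power4_eq_xxxx power2_eq_square mult.assoc)
    show ?thesis by (rule bonami_step[OF A0 _ IHA IHB CS]) simp
  qed
  have e1: "(2::real) ^ Suc n * (2 * P + 12 * R + 2 * Q) = 4 * (2 ^ n * (P + 6 * R + Q))"
    by (simp add: algebra_simps)
  have e2: "M * (2 * A + 2 * B)\<^sup>2 = 4 * (M * (A + B)\<^sup>2)"
    by (simp add: power2_eq_square algebra_simps)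
  show ?case unfolding S4 S2 M_def[symmetric] e1 e2
    using key by simp
qed

definition flip :: "nat \<Rightarrow> (nat \<Rightarrow> bool) \<Rightarrow> (nat \<Rightarrow> bool)" where
  "flip i X = X(i := \<not> X i)"

lemma flip_flip[simp]: "flip i (flip i X) = X"
  by (rule ext) (simp add: flip_def)

lemma flip_comm: "flip i (flip j X) = flip j (flip i X)"
  by (rule ext) (simp add: flip_def)

lemma flip_other[simp]: "i \<noteq> j \<Longrightarrow> flip i X j = X j"
  by (simp add: flip_def)

lemma sg_not[simp]: "sg (\<not> b) = - (sg b :: 'a::comm_ring_1)"
  by (simp add: sg_def)

lemma flip_same[simp]: "flip i X i = (\<not> X i)"
  by (simp add: flip_def)

primrec Rn :: "nat set \<Rightarrow> real \<Rightarrow> nat \<Rightarrow> ((nat \<Rightarrow> bool) \<Rightarrow> real) \<Rightarrow> (nat \<Rightarrow> bool) \<Rightarrow> real" where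
  "Rn B t 0 f = f"
| "Rn B t (Suc n) f = (if n \<in> B then (\<lambda>X. (1 + t) / 2 * Rn B t n f X + (1 - t) / 2 * Rn B t n f (flip n X))
                       else Rn B t n f)"

lemma Rn_bound:
  assumes "\<And>Y. \<bar>f Y\<bar> \<le> M" "0 \<le> t" "t \<le> 1"
  shows "\<bar>Rn B t n f X\<bar> \<le> M"
proof (induction n arbitrary: X)
  case 0 then show ?case using assms by simp
next
  case (Suc n)
  show ?case
  proof (cases "n \<in> B")
    case True
    have "\<bar>(1 + t) / 2 * Rn B t n f X + (1 - t) / 2 * Rn B t n f (flip n X)\<bar>
        \<le> (1 + t) / 2 * \<bar>Rn B t n f X\<bar> + (1 - t) / 2 * \<bar>Rn B t n f (flip n X)\<bar>"
      using assms by (simp add: abs_mult order.trans[OF abs_triangle_ineq])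
    also have "\<dots> \<le> (1 + t) / 2 * M + (1 - t) / 2 * M"
      using assms Suc.IH[of X] Suc.IH[of "flip n X"] by (intro add_mono mult_left_mono) auto
    also have "\<dots> = M" by (simp add: field_simps)
    finally show ?thesis using True by simp
  next
    case False then show ?thesis using Suc.IH by simp
  qed
qed

lemma Rn_one: "Rn B 1 n f = f"
  by (induction n) auto

lemma Rn_deriv:
  "DERIV (\<lambda>t. Rn B t n f X) 1 :> (\<Sum>i\<in>B \<inter> {..<n}. (f X - f (flip i X)) / 2)"
proof (induction n arbitrary: X)
  case 0 then show ?case by simp
next
  case (Suc n)
  show ?case
  proof (cases "n \<in> B")
    case True
    define S where "S = (\<Sum>i\<in>B \<inter> {..<n}. (f X - f (flip i X)) / 2)"
    define S' where "S' = (\<Sum>i\<in>B \<inter> {..<n}. (f (flip n X) - f (flip i (flip n X))) / 2)"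
    have d1: "DERIV (\<lambda>t. Rn B t n f X) 1 :> S" unfolding S_def by (rule Suc.IH)
    have d2: "DERIV (\<lambda>t. Rn B t n f (flip n X)) 1 :> S'" unfolding S'_def by (rule Suc.IH)
    have a: "DERIV (\<lambda>t::real. (1 + t) / 2) 1 :> 1 / 2" by (auto intro!: derivative_eq_intros)
    have b: "DERIV (\<lambda>t::real. (1 - t) / 2) 1 :> - 1 / 2" by (auto intro!: derivative_eq_intros)
    have d: "DERIV (\<lambda>t. (1 + t) / 2 * Rn B t n f X + (1 - t) / 2 * Rn B t n f (flip n X)) 1 :>
       (1 / 2 * Rn B 1 n f X + S * ((1 + 1) / 2)) + (- 1 / 2 * Rn B 1 n f (flip n X) + S' * ((1 - 1) / 2))"
      by (rule DERIV_add[OF DERIV_mult[OF a d1] DERIV_mult[OF b d2]])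
    have s: "B \<inter> {..<Suc n} = insert n (B \<inter> {..<n})" using True by auto
    have eq: "(1 / 2 * Rn B 1 n f X + S * ((1 + 1) / 2)) + (- 1 / 2 * Rn B 1 n f (flip n X) + S' * ((1 - 1) / 2))
        = (\<Sum>i\<in>B \<inter> {..<Suc n}. (f X - f (flip i X)) / 2)"
      unfolding s S_def by (simp add: Rn_one diff_divide_distrib)
    have fn: "(\<lambda>t. Rn B t (Suc n) f X) = (\<lambda>t. (1 + t) / 2 * Rn B t n f X + (1 - t) / 2 * Rn B t n f (flip n X))"
      using True by simp
    show ?thesis unfolding fn eq[symmetric] by (rule d)
  next
    case False
    have s: "B \<inter> {..<Suc n} = B \<inter> {..<n}" using False by (auto simp: less_Suc_eq)
    show ?thesis using Suc.IH False s by simp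
  qed
qed

lemma Rn_add: "Rn B t n (\<lambda>X. f X + g X) = (\<lambda>X. Rn B t n f X + Rn B t n g X)"
  by (induction n) (auto simp: algebra_simps)

lemma Rn_zero: "Rn B t n (\<lambda>X. 0) = (\<lambda>X. 0)"
  by (induction n) auto

lemma Rn_cmult:
  assumes "\<And>X i. i < n \<Longrightarrow> c (flip i X) = c X"
  shows "Rn B t n (\<lambda>X. c X * f X) = (\<lambda>X. c X * Rn B t n f X)"
  using assms
proof (induction n)
  case 0 then show ?case by simp
next
  case (Suc n)
  have IH: "Rn B t n (\<lambda>X. c X * f X) = (\<lambda>X. c X * Rn B t n f X)" using Suc by simp
  have cn: "c (flip n X) = c X" for X using Suc.prems[of n] by simp
  show ?case by (rule ext) (simp add: IH cn algebra_simps)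
qed

lemma Rn_indep:
  assumes "\<And>X. h (flip j X) = h X" "n \<le> j"
  shows "Rn B t n h (flip j X) = Rn B t n h X"
  using assms(2)
proof (induction n arbitrary: X)
  case 0 then show ?case using assms(1) by simp
next
  case (Suc n)
  have "n \<noteq> j" using Suc by simp
  have "flip n (flip j X) = flip j (flip n X)" by (rule flip_comm)
  then show ?case using Suc by simp
qed

lemma ld_flip_indep: "ld n k h \<Longrightarrow> n \<le> j \<Longrightarrow> h (flip j X) = h X"
  unfolding flip_def by (rule ld_indep_upd)

lemma Rn_poly:
  fixes f :: "(nat \<Rightarrow> bool) \<Rightarrow> real"
  assumes "ld n k f"
  shows "\<exists>P. degree P \<le> nat k \<and> (\<forall>t. Rn B t n f X = poly P t)"
  using assms
proof (induction n arbitrary: k f X)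
  case 0
  then obtain c where c: "f = (\<lambda>_. c)" by auto
  show ?case by (rule exI[of _ "[:c:]"]) (simp add: c)
next
  case (Suc n)
  obtain h0 h1 where h: "ld n k h0" "ld n (k - 1) h1" "f = (\<lambda>X. h0 X + sg (X n) * h1 X)"
    using Suc.prems(1) by auto
  have cflip: "\<And>X i. i < n \<Longrightarrow> (\<lambda>X. sg (X n) :: real) (flip i X) = sg (X n)" by simp
  have Rf: "Rn B t n f = (\<lambda>X. Rn B t n h0 X + sg (X n) * Rn B t n h1 X)" for t
    unfolding h(3) Rn_add using Rn_cmult[of n "\<lambda>X. sg (X n)" B t h1] by simp
  obtain P0 where P0: "degree P0 \<le> nat k" "\<And>t. Rn B t n h0 X = poly P0 t"
    using Suc.IH[OF h(1), of X] by auto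
  obtain P1 where P1: "degree P1 \<le> nat (k - 1)" "\<And>t. Rn B t n h1 X = poly P1 t"
    using Suc.IH[OF h(2), of X] by auto
  have a_fl: "Rn B t n h0 (flip n X) = Rn B t n h0 X" for t
    by (rule Rn_indep) (auto intro: ld_flip_indep[OF h(1)])
  have b_fl: "Rn B t n h1 (flip n X) = Rn B t n h1 X" for t
    by (rule Rn_indep) (auto intro: ld_flip_indep[OF h(2)])
  have sfl: "sg (flip n X n) = - (sg (X n) :: real)" by (simp add: sg_def)
  show ?case
  proof (cases "n \<in> B")
    case True
    have val: "Rn B t (Suc n) f X = Rn B t n h0 X + sg (X n) * (t * Rn B t n h1 X)" for t
      using True by (simp add: Rf a_fl b_fl) (simp add: field_simps)
    show ?thesis
    proof (cases "k \<le> 0")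
      case True
      then have "h1 = (\<lambda>_. 0)" using ld_neg[OF h(2)] by simp
      then have "Rn B t n h1 X = 0" for t by (simp add: Rn_zero)
      then show ?thesis using val P0 by (intro exI[of _ P0]) simp
    next
      case False
      have "degree (P0 + smult (sg (X n)) (pCons 0 P1)) \<le> nat k"
      proof (rule order.trans[OF degree_add_le_max] , rule max.boundedI)
        show "degree P0 \<le> nat k" by (rule P0(1))
        have "degree (smult (sg (X n)) (pCons 0 P1)) \<le> degree (pCons 0 P1)" by (rule degree_smult_le)
        also have "\<dots> \<le> Suc (degree P1)" by (cases "P1 = 0") auto
        also have "\<dots> \<le> nat k" using P1(1) False by simp
        finally show "degree (smult (sg (X n)) (pCons 0 P1)) \<le> nat k" .
      qed
      then show ?thesis using val P0 P1 by (intro exI[of _ "P0 + smult (sg (X n)) (pCons 0 P1)"]) simp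
    qed
  next
    case False
    have val: "Rn B t (Suc n) f X = Rn B t n h0 X + sg (X n) * Rn B t n h1 X" for t
      using False by (simp add: Rf)
    have "degree (P0 + smult (sg (X n)) P1) \<le> nat k"
    proof (rule order.trans[OF degree_add_le_max] , rule max.boundedI)
      show "degree P0 \<le> nat k" by (rule P0(1))
      show "degree (smult (sg (X n)) P1) \<le> nat k"
        using degree_smult_le[of "sg (X n)" P1] P1(1) by linarith
    qed
    then show ?thesis using val P0 P1 by (intro exI[of _ "P0 + smult (sg (X n)) P1"]) simp
  qed
qed

lemma Rn_sum_bound:
  fixes f :: "(nat \<Rightarrow> bool) \<Rightarrow> real"
  assumes "ld n k f" "\<And>Y. \<bar>f Y\<bar> \<le> M"
  shows "\<bar>\<Sum>i\<in>B \<inter> {..<n}. (f X - f (flip i X)) / 2\<bar> \<le> M * real (nat k) * 6 ^ (nat k)"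
proof -
  obtain P where P: "degree P \<le> nat k" "\<And>t. Rn B t n f X = poly P t"
    using Rn_poly[OF assms(1)] by blast
  have e: "(\<lambda>t. Rn B t n f X) = (\<lambda>t. poly P t)" using P(2) by auto
  have "(\<Sum>i\<in>B \<inter> {..<n}. (f X - f (flip i X)) / 2) = poly (pderiv P) 1"
    using Rn_deriv[of B n f X] poly_DERIV[of P 1] unfolding e by (rule DERIV_unique)
  also have "\<bar>\<dots>\<bar> \<le> M * real (nat k) * 6 ^ (nat k)"
  proof (rule markov_crude[OF P(1)])
    fix t :: real assume "0 \<le> t" "t \<le> 1"
    then show "\<bar>poly P t\<bar> \<le> M" using Rn_bound[of f M t B n X] assms(2) P(2) by simp
  qed
  finally show ?thesis .
qed

definition Dd :: "nat \<Rightarrow> ((nat \<Rightarrow> bool) \<Rightarrow> real) \<Rightarrow> (nat \<Rightarrow> bool) \<Rightarrow> real" where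
  "Dd i f X = (f (X(i := False)) - f (X(i := True))) / 2"

lemma abs_Dd: "\<bar>Dd i f X\<bar> = \<bar>f X - f (flip i X)\<bar> / 2"
proof (cases "X i")
  case True
  then have "X(i := True) = X" "X(i := False) = flip i X" by (simp_all add: fun_upd_idem flip_def)
  then show ?thesis by (simp add: Dd_def abs_minus_commute)
next
  case False
  then have "X(i := False) = X" "X(i := True) = flip i X" by (simp_all add: fun_upd_idem flip_def)
  then show ?thesis by (simp add: Dd_def)
qed

lemma pointwise_L:
  fixes f :: "(nat \<Rightarrow> bool) \<Rightarrow> real"
  assumes "ld n k f" "\<And>Y. \<bar>f Y\<bar> \<le> M"
  shows "(\<Sum>i<n. \<bar>Dd i f X\<bar>) \<le> 2 * (M * real (nat k) * 6 ^ (nat k))"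
proof -
  define Bp where "Bp = {i. f (flip i X) \<le> f X}"
  define Bm where "Bm = {i. \<not> f (flip i X) \<le> f X}"
  have split: "{..<n} = (Bp \<inter> {..<n}) \<union> (Bm \<inter> {..<n})" by (auto simp: Bp_def Bm_def)
  have e0: "(\<Sum>i<n. \<bar>Dd i f X\<bar>) = (\<Sum>i\<in>Bp \<inter> {..<n}. \<bar>Dd i f X\<bar>) + (\<Sum>i\<in>Bm \<inter> {..<n}. \<bar>Dd i f X\<bar>)"
    by (subst split, rule sum.union_disjoint) (auto simp: Bp_def Bm_def)
  have e1: "(\<Sum>i\<in>Bp \<inter> {..<n}. \<bar>Dd i f X\<bar>) = (\<Sum>i\<in>Bp \<inter> {..<n}. (f X - f (flip i X)) / 2)"
    by (rule sum.cong) (auto simp: abs_Dd Bp_def)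
  have e2: "(\<Sum>i\<in>Bm \<inter> {..<n}. \<bar>Dd i f X\<bar>) = - (\<Sum>i\<in>Bm \<inter> {..<n}. (f X - f (flip i X)) / 2)"
    unfolding sum_negf[symmetric]
  proof (rule sum.cong[OF refl])
    fix x assume "x \<in> Bm \<inter> {..<n}"
    then have "f X - f (flip x X) < 0" by (simp add: Bm_def)
    then show "\<bar>Dd x f X\<bar> = - ((f X - f (flip x X)) / 2)" by (simp add: abs_Dd) (simp add: field_simps)
  qed
  show ?thesis using e0 e1 e2 Rn_sum_bound[OF assms, where B=Bp and X=X] Rn_sum_bound[OF assms, where B=Bm and X=X]
    by linarith
qed

lemma l2_l1:
  fixes g :: "'x \<Rightarrow> real"
  assumes fin: "finite I" and c: "0 < c" and M: "0 \<le> M"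
    and h: "c * (\<Sum>i\<in>I. (g i) ^ 4) \<le> M * (\<Sum>i\<in>I. (g i)\<^sup>2)\<^sup>2"
  shows "c * (\<Sum>i\<in>I. (g i)\<^sup>2) \<le> M * (\<Sum>i\<in>I. \<bar>g i\<bar>)\<^sup>2"
proof -
  define S1 where "S1 = (\<Sum>i\<in>I. \<bar>g i\<bar>)"
  define S2 where "S2 = (\<Sum>i\<in>I. (g i)\<^sup>2)"
  define S3 where "S3 = (\<Sum>i\<in>I. \<bar>g i\<bar> ^ 3)"
  define S4 where "S4 = (\<Sum>i\<in>I. (g i) ^ 4)"
  have pos: "0 \<le> S1" "0 \<le> S2" "0 \<le> S3" "0 \<le> S4"
    unfolding S1_def S2_def S3_def S4_def by (simp_all add: sum_nonneg zero_le_even_power)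
  have cs1: "S2\<^sup>2 \<le> S1 * S3"
  proof -
    have CS: "(\<Sum>i\<in>I. sqrt \<bar>g i\<bar> * (sqrt \<bar>g i\<bar> * \<bar>g i\<bar>))\<^sup>2 \<le> (\<Sum>i\<in>I. (sqrt \<bar>g i\<bar>)\<^sup>2) * (\<Sum>i\<in>I. (sqrt \<bar>g i\<bar> * \<bar>g i\<bar>)\<^sup>2)"
      by (rule Cauchy_Schwarz_ineq_sum)
    have e1: "\<And>i. sqrt \<bar>g i\<bar> * (sqrt \<bar>g i\<bar> * \<bar>g i\<bar>) = (g i)\<^sup>2"
    proof -
      fix i
      have "sqrt \<bar>g i\<bar> * (sqrt \<bar>g i\<bar> * \<bar>g i\<bar>) = (sqrt \<bar>g i\<bar> * sqrt \<bar>g i\<bar>) * \<bar>g i\<bar>"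
        by (simp only: mult.assoc)
      also have "\<dots> = \<bar>g i\<bar> * \<bar>g i\<bar>" by (simp only: real_sqrt_mult_self abs_abs)
      also have "\<dots> = (g i)\<^sup>2" by (simp add: power2_eq_square)
      finally show "sqrt \<bar>g i\<bar> * (sqrt \<bar>g i\<bar> * \<bar>g i\<bar>) = (g i)\<^sup>2" .
    qed
    have e2: "\<And>i. (sqrt \<bar>g i\<bar>)\<^sup>2 = \<bar>g i\<bar>" by simp
    have e3: "\<And>i. (sqrt \<bar>g i\<bar> * \<bar>g i\<bar>)\<^sup>2 = \<bar>g i\<bar> ^ 3"
    proof -
      fix i
      have "(sqrt \<bar>g i\<bar> * \<bar>g i\<bar>)\<^sup>2 = (sqrt \<bar>g i\<bar>)\<^sup>2 * \<bar>g i\<bar>\<^sup>2" by (rule power_mult_distrib)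
      also have "\<dots> = \<bar>g i\<bar> * \<bar>g i\<bar>\<^sup>2" by simp
      also have "\<dots> = \<bar>g i\<bar> ^ 3" by (simp add: power3_eq_cube power2_eq_square)
      finally show "(sqrt \<bar>g i\<bar> * \<bar>g i\<bar>)\<^sup>2 = \<bar>g i\<bar> ^ 3" .
    qed
    show ?thesis using CS unfolding e1 e2 e3 S1_def S2_def S3_def .
  qed
  have cs2: "S3\<^sup>2 \<le> S2 * S4"
  proof -
    have "(\<Sum>i\<in>I. \<bar>g i\<bar> * (\<bar>g i\<bar> * \<bar>g i\<bar>))\<^sup>2 \<le> (\<Sum>i\<in>I. \<bar>g i\<bar>\<^sup>2) * (\<Sum>i\<in>I. (\<bar>g i\<bar> * \<bar>g i\<bar>)\<^sup>2)"
      by (rule Cauchy_Schwarz_ineq_sum)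
    moreover have "\<And>i. \<bar>g i\<bar> * (\<bar>g i\<bar> * \<bar>g i\<bar>) = \<bar>g i\<bar> ^ 3" by (simp add: power3_eq_cube)
    moreover have "\<And>i. (\<bar>g i\<bar> * \<bar>g i\<bar>)\<^sup>2 = (g i) ^ 4"
      by (simp add: power4_eq_xxxx power2_eq_square)
    ultimately show ?thesis unfolding S2_def S3_def S4_def by simp
  qed
  show ?thesis
  proof (cases "S2 = 0")
    case True
    then show ?thesis using M unfolding S2_def[symmetric] S1_def[symmetric] by simp
  next
    case False
    then have S2p: "0 < S2" using pos by simp
    have "S2 ^ 4 = (S2\<^sup>2)\<^sup>2" by simp
    also have "\<dots> \<le> (S1 * S3)\<^sup>2" using cs1 pos by (intro power_mono) auto
    also have "\<dots> = S1\<^sup>2 * S3\<^sup>2" by (simp add: power_mult_distrib)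
    also have "\<dots> \<le> S1\<^sup>2 * (S2 * S4)" using cs2 by (intro mult_left_mono) auto
    finally have a: "S2 ^ 4 \<le> S1\<^sup>2 * (S2 * S4)" .
    have "c * S2 ^ 4 \<le> S1\<^sup>2 * S2 * (c * S4)"
      using mult_left_mono[OF a, of c] c by (simp add: mult_ac)
    also have "\<dots> \<le> S1\<^sup>2 * S2 * (M * S2\<^sup>2)"
      using h pos unfolding S4_def[symmetric] S2_def[symmetric] by (intro mult_left_mono) auto
    finally have "(c * S2) * S2 ^ 3 \<le> (M * S1\<^sup>2) * S2 ^ 3"
      by (simp add: power2_eq_square power3_eq_cube power4_eq_xxxx mult_ac)
    then have "c * S2 \<le> M * S1\<^sup>2" using S2p by (simp add: mult_le_cancel_right)
    then show ?thesis unfolding S1_def S2_def .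
  qed
qed

lemma flip_inputs: "i < N \<Longrightarrow> X \<in> inputs N \<Longrightarrow> flip i X \<in> inputs N"
  by (auto simp: inputs_def flip_def)

lemma sum_flip:
  assumes "i < N"
  shows "(\<Sum>X\<in>inputs N. \<phi> (flip i X)) = (\<Sum>X\<in>inputs N. \<phi> X)"
  by (rule sum.reindex_bij_witness[of _ "flip i" "flip i"]) (auto simp: flip_inputs[OF assms])

definition avg :: "nat \<Rightarrow> ((nat \<Rightarrow> bool) \<Rightarrow> real) \<Rightarrow> (nat \<Rightarrow> bool) \<Rightarrow> real" where
  "avg i f X = (f (X(i := False)) + f (X(i := True))) / 2"

lemma avg_flip: "avg i f X = (f X + f (flip i X)) / 2"
proof (cases "X i")
  case True
  then have "X(i := True) = X" "X(i := False) = flip i X" by (simp_all add: fun_upd_idem flip_def)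
  then show ?thesis by (simp add: avg_def)
next
  case False
  then have "X(i := False) = X" "X(i := True) = flip i X" by (simp_all add: fun_upd_idem flip_def)
  then show ?thesis by (simp add: avg_def)
qed

lemma avg_inv: "avg i f (flip i X) = avg i f X"
  by (simp add: avg_def flip_def)

primrec avgL :: "nat list \<Rightarrow> ((nat \<Rightarrow> bool) \<Rightarrow> real) \<Rightarrow> (nat \<Rightarrow> bool) \<Rightarrow> real" where
  "avgL [] f = f"
| "avgL (i # is) f = avg i (avgL is f)"

lemma efron_stein:
  assumes "\<forall>i\<in>set ks. i < N"
  shows "(\<Sum>X\<in>inputs N. (f X - avgL ks f X)\<^sup>2) \<le> (\<Sum>i\<leftarrow>ks. (\<Sum>X\<in>inputs N. (Dd i f X)\<^sup>2))"
  using assms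
proof (induction ks)
  case Nil then show ?case by simp
next
  case (Cons i "is")
  have iN: "i < N" using Cons.prems by simp
  define \<phi> where "\<phi> X = f X - avgL is f X" for X
  define u where "u X = f X - avg i f X" for X
  define v where "v X = avg i \<phi> X" for X
  have split: "f X - avgL (i # is) f X = u X + v X" for X
    by (simp add: u_def v_def \<phi>_def avg_def) (simp add: field_simps)
  have u_fl: "u (flip i X) = - u X" for X by (simp add: u_def avg_flip) (simp add: field_simps)
  have v_fl: "v (flip i X) = v X" for X by (simp add: v_def avg_inv)
  have uv: "(\<Sum>X\<in>inputs N. u X * v X) = 0"
  proof -
    have "(\<Sum>X\<in>inputs N. u X * v X) = (\<Sum>X\<in>inputs N. u (flip i X) * v (flip i X))"
      by (rule sum_flip[OF iN, symmetric])
    also have "\<dots> = - (\<Sum>X\<in>inputs N. u X * v X)" by (simp add: u_fl v_fl sum_negf)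
    finally show ?thesis by simp
  qed
  have uu: "(u X)\<^sup>2 = (Dd i f X)\<^sup>2" for X
  proof -
    have "\<bar>u X\<bar> = \<bar>Dd i f X\<bar>" by (simp add: u_def avg_flip abs_Dd field_simps)
    then show ?thesis by (metis power2_abs)
  qed
  have vv: "(\<Sum>X\<in>inputs N. (v X)\<^sup>2) \<le> (\<Sum>X\<in>inputs N. (\<phi> X)\<^sup>2)"
  proof -
    have "(\<Sum>X\<in>inputs N. (v X)\<^sup>2) \<le> (\<Sum>X\<in>inputs N. ((\<phi> X)\<^sup>2 + (\<phi> (flip i X))\<^sup>2) / 2)"
    proof (rule sum_mono)
      fix X
      have "(v X)\<^sup>2 = ((\<phi> X + \<phi> (flip i X)) / 2)\<^sup>2" by (simp add: v_def avg_flip)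
      also have "\<dots> \<le> ((\<phi> X)\<^sup>2 + (\<phi> (flip i X))\<^sup>2) / 2"
        using sum_squares_ge_zero[of "\<phi> X - \<phi> (flip i X)" 0]
        by (simp add: power2_eq_square field_simps)
      finally show "(v X)\<^sup>2 \<le> ((\<phi> X)\<^sup>2 + (\<phi> (flip i X))\<^sup>2) / 2" .
    qed
    also have "\<dots> = ((\<Sum>X\<in>inputs N. (\<phi> X)\<^sup>2) + (\<Sum>X\<in>inputs N. (\<phi> (flip i X))\<^sup>2)) / 2"
      by (simp only: sum.distrib[symmetric] sum_divide_distrib)
    also have "\<dots> = (\<Sum>X\<in>inputs N. (\<phi> X)\<^sup>2)"
      using sum_flip[OF iN, of "\<lambda>X. (\<phi> X)\<^sup>2"] by simp
    finally show ?thesis .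
  qed
  have "(\<Sum>X\<in>inputs N. (f X - avgL (i # is) f X)\<^sup>2) = (\<Sum>X\<in>inputs N. (u X + v X)\<^sup>2)"
    by (simp only: split)
  also have "\<dots> = (\<Sum>X\<in>inputs N. (u X)\<^sup>2) + (\<Sum>X\<in>inputs N. (v X)\<^sup>2) + 2 * (\<Sum>X\<in>inputs N. u X * v X)"
    by (simp add: power2_sum sum.distrib sum_distrib_left mult.assoc)
  also have "\<dots> \<le> (\<Sum>X\<in>inputs N. (Dd i f X)\<^sup>2) + (\<Sum>X\<in>inputs N. (\<phi> X)\<^sup>2)"
    using vv by (simp add: uv uu)
  also have "(\<Sum>X\<in>inputs N. (\<phi> X)\<^sup>2) \<le> (\<Sum>j\<leftarrow>is. (\<Sum>X\<in>inputs N. (Dd j f X)\<^sup>2))"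
    using Cons by (simp add: \<phi>_def)
  finally show ?case by simp
qed

lemma avgL_dep:
  assumes "\<And>X Y. (\<forall>j\<in>U. X j = Y j) \<Longrightarrow> f X = f Y"
  shows "(\<forall>j\<in>U - set ks. X j = Y j) \<Longrightarrow> avgL ks f X = avgL ks f Y"
proof (induction ks arbitrary: X Y)
  case Nil then show ?case using assms by simp
next
  case (Cons i "is")
  have "avgL is f (X(i := b)) = avgL is f (Y(i := b))" for b
    by (rule Cons.IH) (use Cons.prems in auto)
  then show ?case by (simp add: avg_def)
qed

lemma ld_Dd: "ld n k f \<Longrightarrow> ld n k (Dd i f)"
proof -
  assume a: "ld n k f"
  have "ld n k (\<lambda>X. (1/2) * (f (X(i := False)) - f (X(i := True))))"
    by (intro ld_cmult ld_diff ld_upd a)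
  then show ?thesis unfolding Dd_def by (simp add: field_simps)
qed

theorem junta_main:
  fixes f :: "(nat \<Rightarrow> bool) \<Rightarrow> real" and d N :: nat and \<alpha> \<delta> :: real
  assumes ld: "ld N (int d) f" and bnd: "\<And>Y. \<bar>f Y\<bar> \<le> 1" and \<alpha>: "0 < \<alpha>" and \<delta>: "0 < \<delta>"
  shows "\<exists>S g. nonadaptive_alg N S g \<and>
     real (card S) \<le> 9 ^ d * (2 * real d * 6 ^ d) * (2 * real d * 6 ^ d + 1) / (\<alpha>\<^sup>2 * \<delta>) \<and>
     (1 - \<delta>) * 2 ^ N \<le> real (card {X \<in> inputs N. \<bar>g X - f X\<bar> \<le> \<alpha>})"
proof -
  define L :: real where "L = 2 * real d * 6 ^ d"
  have L0: "0 \<le> L" by (simp add: L_def)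
  define a where "a i = (\<Sum>X\<in>inputs N. \<bar>Dd i f X\<bar>)" for i
  have a0: "0 \<le> a i" for i by (simp add: a_def sum_nonneg)
  have pL: "(\<Sum>i<N. \<bar>Dd i f X\<bar>) \<le> L" for X
    using pointwise_L[OF ld bnd, of X] by (simp add: L_def)
  have sumA: "(\<Sum>i<N. a i) \<le> 2 ^ N * L"
  proof -
    have "(\<Sum>i<N. a i) = (\<Sum>X\<in>inputs N. (\<Sum>i<N. \<bar>Dd i f X\<bar>))"
      unfolding a_def by (rule sum.swap)
    also have "\<dots> \<le> (\<Sum>X\<in>inputs N. L)" by (rule sum_mono) (rule pL)
    also have "\<dots> = 2 ^ N * L" by (simp add: card_inputs)
    finally show ?thesis .
  qed
  define \<sigma> where "\<sigma> = \<alpha>\<^sup>2 * \<delta> / (9 ^ d * (L + 1))"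
  have \<sigma>0: "0 < \<sigma>" using \<alpha> \<delta> L0 by (simp add: \<sigma>_def)
  define J where "J = {i. i < N \<and> \<sigma> * 2 ^ N \<le> a i}"
  have JN: "J \<subseteq> {..<N}" by (auto simp: J_def)
  have finJ: "finite J" using JN finite_subset by blast
  have cardJ: "real (card J) \<le> 9 ^ d * L * (L + 1) / (\<alpha>\<^sup>2 * \<delta>)"
  proof -
    have "real (card J) * (\<sigma> * 2 ^ N) = (\<Sum>i\<in>J. \<sigma> * 2 ^ N)" by simp
    also have "\<dots> \<le> (\<Sum>i\<in>J. a i)" by (rule sum_mono) (simp add: J_def)
    also have "\<dots> \<le> (\<Sum>i<N. a i)" using JN a0 by (intro sum_mono2) auto
    also have "\<dots> \<le> 2 ^ N * L" by (rule sumA)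
    finally have "real (card J) * \<sigma> \<le> L" by (simp add: mult_ac)
    then have "real (card J) \<le> L / \<sigma>" using \<sigma>0 by (simp add: le_divide_eq)
    also have "L / \<sigma> = 9 ^ d * L * (L + 1) / (\<alpha>\<^sup>2 * \<delta>)"
      using \<alpha> \<delta> L0 by (simp add: \<sigma>_def field_simps)
    finally show ?thesis .
  qed
  define ks where "ks = filter (\<lambda>i. i \<notin> J) [0..<N]"
  have setks: "set ks = {i. i < N \<and> i \<notin> J}" by (auto simp: ks_def)
  have distks: "distinct ks" by (simp add: ks_def)
  define r where "r X = (\<lambda>j. if j \<in> J then X j else False)" for X :: "nat \<Rightarrow> bool"
  define g where "g X = avgL ks f (r X)" for X
  have nonad: "nonadaptive_alg N J g"
    unfolding nonadaptive_alg_def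
  proof (intro conjI allI impI)
    show "J \<subseteq> {..<N}" by (rule JN)
    fix X Y :: "nat \<Rightarrow> bool" assume "\<forall>i\<in>J. X i = Y i"
    then have "r X = r Y" by (auto simp: r_def)
    then show "g X = g Y" by (simp add: g_def)
  qed
  have fdep: "\<And>X Y. (\<forall>j\<in>{..<N}. X j = Y j) \<Longrightarrow> f X = f Y"
    using ld_indep[OF ld] by auto
  have gX: "g X = avgL ks f X" if X: "X \<in> inputs N" for X
    unfolding g_def
  proof (rule avgL_dep[OF fdep])
    show "\<forall>j\<in>{..<N} - set ks. r X j = X j" by (auto simp: r_def setks)
  qed
  have Ddb: "(\<Sum>X\<in>inputs N. (Dd i f X)\<^sup>2) \<le> 9 ^ d * (a i)\<^sup>2 / 2 ^ N" for i
  proof -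
    have b: "2 ^ N * (\<Sum>X\<in>inputs N. (Dd i f X) ^ 4) \<le> 9 ^ d * (\<Sum>X\<in>inputs N. (Dd i f X)\<^sup>2)\<^sup>2"
      using bonami[OF ld_Dd[OF ld, of i]] by simp
    have "2 ^ N * (\<Sum>X\<in>inputs N. (Dd i f X)\<^sup>2) \<le> 9 ^ d * (a i)\<^sup>2"
      unfolding a_def by (rule l2_l1[OF finite_inputs _ _ b]) auto
    then show ?thesis by (simp add: field_simps)
  qed
  have Ddk: "(\<Sum>X\<in>inputs N. (Dd i f X)\<^sup>2) \<le> 9 ^ d * \<sigma> * a i" if i: "i \<in> set ks" for i
  proof -
    have "a i < \<sigma> * 2 ^ N" using i by (auto simp: setks J_def)
    then have "(a i)\<^sup>2 \<le> (\<sigma> * 2 ^ N) * a i"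
      using a0[of i] unfolding power2_eq_square by (intro mult_right_mono) auto
    then have "9 ^ d * (a i)\<^sup>2 / 2 ^ N \<le> 9 ^ d * ((\<sigma> * 2 ^ N) * a i) / 2 ^ N"
      by (intro divide_right_mono mult_left_mono) auto
    also have "\<dots> = 9 ^ d * \<sigma> * a i" by simp
    finally show ?thesis using Ddb[of i] by linarith
  qed
  have ES: "(\<Sum>X\<in>inputs N. (f X - g X)\<^sup>2) \<le> \<alpha>\<^sup>2 * \<delta> * 2 ^ N"
  proof -
    have "(\<Sum>X\<in>inputs N. (f X - g X)\<^sup>2) = (\<Sum>X\<in>inputs N. (f X - avgL ks f X)\<^sup>2)"
      by (rule sum.cong) (auto simp: gX)
    also have "\<dots> \<le> (\<Sum>i\<leftarrow>ks. (\<Sum>X\<in>inputs N. (Dd i f X)\<^sup>2))"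
      by (rule efron_stein) (simp add: setks)
    also have "\<dots> = (\<Sum>i\<in>set ks. (\<Sum>X\<in>inputs N. (Dd i f X)\<^sup>2))"
      using distks by (simp add: sum_list_distinct_conv_sum_set)
    also have "\<dots> \<le> (\<Sum>i\<in>set ks. 9 ^ d * \<sigma> * a i)" by (rule sum_mono) (rule Ddk)
    also have "\<dots> \<le> (\<Sum>i<N. 9 ^ d * \<sigma> * a i)"
      using a0 \<sigma>0 by (intro sum_mono2) (auto simp: setks)
    also have "\<dots> = 9 ^ d * \<sigma> * (\<Sum>i<N. a i)" by (simp add: sum_distrib_left)
    also have "\<dots> \<le> 9 ^ d * \<sigma> * (2 ^ N * L)" using \<sigma>0 by (intro mult_left_mono sumA) auto
    also have "\<dots> = \<alpha>\<^sup>2 * \<delta> * 2 ^ N * (L / (L + 1))"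
    proof -
      have ne: "L + 1 \<noteq> 0" using L0 by simp
      have "9 ^ d * \<sigma> = \<alpha>\<^sup>2 * \<delta> / (L + 1)" by (simp add: \<sigma>_def)
      then show ?thesis by (simp add: mult_ac)
    qed
    also have "\<dots> \<le> \<alpha>\<^sup>2 * \<delta> * 2 ^ N * 1"
      using L0 \<alpha> \<delta> by (intro mult_left_mono) auto
    finally show ?thesis by simp
  qed
  define bad where "bad = {X \<in> inputs N. \<not> \<bar>g X - f X\<bar> \<le> \<alpha>}"
  define good where "good = {X \<in> inputs N. \<bar>g X - f X\<bar> \<le> \<alpha>}"
  have finb: "finite bad" by (simp add: bad_def finite_inputs)
  have "real (card bad) * \<alpha>\<^sup>2 = (\<Sum>X\<in>bad. \<alpha>\<^sup>2)" by simp
  also have "\<dots> \<le> (\<Sum>X\<in>bad. (f X - g X)\<^sup>2)"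
  proof (rule sum_mono)
    fix X assume "X \<in> bad"
    then have "\<alpha> \<le> \<bar>f X - g X\<bar>" by (auto simp: bad_def abs_minus_commute)
    then have "\<alpha>\<^sup>2 \<le> \<bar>f X - g X\<bar>\<^sup>2" using \<alpha> by (intro power_mono) auto
    then show "\<alpha>\<^sup>2 \<le> (f X - g X)\<^sup>2" by simp
  qed
  also have "\<dots> \<le> (\<Sum>X\<in>inputs N. (f X - g X)\<^sup>2)"
    by (intro sum_mono2) (auto simp: bad_def finite_inputs)
  also have "\<dots> \<le> \<alpha>\<^sup>2 * \<delta> * 2 ^ N" by (rule ES)
  finally have "real (card bad) * \<alpha>\<^sup>2 \<le> (\<delta> * 2 ^ N) * \<alpha>\<^sup>2" by (simp add: mult_ac)
  then have cb: "real (card bad) \<le> \<delta> * 2 ^ N" using \<alpha> by simp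
  have "card good + card bad = card (inputs N)"
  proof -
    have "good \<union> bad = inputs N" "good \<inter> bad = {}" by (auto simp: good_def bad_def)
    then show ?thesis using card_Un_disjoint[of good bad] finite_inputs[of N]
      by (metis finite_Un)
  qed
  then have "card good + card bad = (2::nat) ^ N" by (simp add: card_inputs)
  then have "real (card good) + real (card bad) = 2 ^ N" by (metis of_nat_add of_nat_numeral of_nat_power)
  then have "real (card good) = 2 ^ N - real (card bad)" by simp
  then have cg: "(1 - \<delta>) * 2 ^ N \<le> real (card good)" using cb by (simp add: algebra_simps)
  show ?thesis
    using nonad cardJ cg unfolding good_def L_def by blast
qed

lemma unitary_norm:
  assumes "is_unitary D V"
  shows "(\<Sum>j<D. (cmod (mat_apply D V v j))\<^sup>2) = (\<Sum>k<D. (cmod (v k))\<^sup>2)"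
proof -
  have "complex_of_real (\<Sum>j<D. (cmod (mat_apply D V v j))\<^sup>2)
      = (\<Sum>j<D. (\<Sum>k<D. V j k * v k) * (\<Sum>l<D. cnj (V j l) * cnj (v l)))"
    by (simp only: of_real_sum complex_norm_square mat_apply_def cnj_sum complex_cnj_mult)
  also have "\<dots> = (\<Sum>j<D. \<Sum>k<D. \<Sum>l<D. (V j k * v k) * (cnj (V j l) * cnj (v l)))"
    by (simp add: sum_product)
  also have "\<dots> = (\<Sum>k<D. \<Sum>j<D. \<Sum>l<D. (V j k * v k) * (cnj (V j l) * cnj (v l)))"
    by (rule sum.swap)
  also have "\<dots> = (\<Sum>k<D. \<Sum>l<D. \<Sum>j<D. (V j k * v k) * (cnj (V j l) * cnj (v l)))"
    by (rule sum.cong[OF refl], rule sum.swap)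
  also have "\<dots> = (\<Sum>k<D. \<Sum>l<D. v k * cnj (v l) * (\<Sum>j<D. cnj (V j l) * V j k))"
    by (simp add: sum_distrib_left mult_ac)
  also have "\<dots> = (\<Sum>k<D. \<Sum>l<D. v k * cnj (v l) * (if l = k then 1 else 0))"
    using assms unfolding is_unitary_def by (intro sum.cong refl) auto
  also have "\<dots> = (\<Sum>k<D. v k * cnj (v k))"
  proof (rule sum.cong[OF refl])
    fix k assume k: "k \<in> {..<D}"
    have "(\<Sum>l<D. v k * cnj (v l) * (if l = k then 1 else 0)) = (\<Sum>l<D. if l = k then v k * cnj (v l) else 0)"
      by (rule sum.cong) auto
    also have "\<dots> = v k * cnj (v k)" using k by (simp add: sum.delta')
    finally show "(\<Sum>l<D. v k * cnj (v l) * (if l = k then 1 else 0)) = v k * cnj (v k)" .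
  qed
  also have "\<dots> = complex_of_real (\<Sum>k<D. (cmod (v k))\<^sup>2)"
    by (simp only: of_real_sum complex_norm_square)
  finally show ?thesis by (simp only: of_real_eq_iff)
qed

definition pf :: "nat \<Rightarrow> nat \<Rightarrow> (nat \<Rightarrow> bool) \<Rightarrow> complex" where
  "pf N l X = (if l mod (N + 1) = 0 then 1 else sg (X (l mod (N + 1) - 1)))"

lemma phase_query_pf: "phase_query N X v l = pf N l X * v l"
  by (simp add: phase_query_def pf_def sg_def)

lemma cmod_pf: "cmod (pf N l X) = 1"
  by (simp add: pf_def sg_def)

lemma phase_norm: "(\<Sum>k<D. (cmod (phase_query N X v k))\<^sup>2) = (\<Sum>k<D. (cmod (v k))\<^sup>2)"
  by (simp add: phase_query_pf norm_mult cmod_pf)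

lemma ld_pf: "ld N 1 (pf N l)"
proof (cases "l mod (N + 1) = 0")
  case True
  then have "pf N l = (\<lambda>_. 1)" by (auto simp: pf_def)
  then show ?thesis using ld_const[of 1 N "1::complex"] by simp
next
  case False
  have "l mod (N + 1) < N + 1" by simp
  then have i: "l mod (N + 1) - 1 < N" using False by linarith
  have "pf N l = (\<lambda>X. sg (X (l mod (N + 1) - 1)))" using False by (auto simp: pf_def)
  then show ?thesis using ld_var[OF i] by simp
qed

lemma ld_qstate: "ld N (int t) (\<lambda>X. qstate N m U X t k)"
proof (induction t arbitrary: k)
  case 0
  have "(\<lambda>X. qstate N m U X 0 k) = (\<lambda>X. mat_apply ((N + 1) * m) (U 0) (\<lambda>k. if k = 0 then 1 else 0) k)"
    by simp
  then show ?case using ld_const[of 0 N "mat_apply ((N + 1) * m) (U 0) (\<lambda>k. if k = 0 then 1 else 0) k"] by simp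
next
  case (Suc t)
  have eq: "(\<lambda>X. qstate N m U X (Suc t) k) =
      (\<lambda>X. \<Sum>l<(N + 1) * m. U (Suc t) k l * (pf N l X * qstate N m U X t l))"
    by (simp add: mat_apply_def phase_query_pf)
  have "ld N (int (Suc t)) (\<lambda>X. \<Sum>l<(N + 1) * m. U (Suc t) k l * (pf N l X * qstate N m U X t l))"
  proof (rule ld_sum)
    fix l
    have "ld N (1 + int t) (\<lambda>X. pf N l X * qstate N m U X t l)"
      by (rule ld_mult[OF ld_pf Suc.IH])
    then show "ld N (int (Suc t)) (\<lambda>X. U (Suc t) k l * (pf N l X * qstate N m U X t l))"
      by (intro ld_cmult) (simp add: add.commute)
  qed simp
  then show ?case unfolding eq .
qed

lemma acc_prob_Re:
  "acc_prob N m U Acc T X = Re (\<Sum>k\<in>Acc. qstate N m U X T k * cnj (qstate N m U X T k))"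
proof -
  have "acc_prob N m U Acc T X = (\<Sum>k\<in>Acc. Re (complex_of_real ((cmod (qstate N m U X T k))\<^sup>2)))"
    by (simp add: acc_prob_def)
  also have "\<dots> = Re (\<Sum>k\<in>Acc. qstate N m U X T k * cnj (qstate N m U X T k))"
    by (simp only: complex_norm_square Re_sum)
  finally show ?thesis .
qed

lemma ld_acc:
  assumes "finite Acc"
  shows "ld N (int (2 * T)) (\<lambda>X. acc_prob N m U Acc T X)"
proof -
  have "ld N (int T + int T) (\<lambda>X. \<Sum>k\<in>Acc. qstate N m U X T k * cnj (qstate N m U X T k))"
    by (rule ld_sum[OF assms]) (rule ld_mult[OF ld_qstate ld_cnj[OF ld_qstate]])
  then have "ld N (int (2 * T)) (\<lambda>X. Re (\<Sum>k\<in>Acc. qstate N m U X T k * cnj (qstate N m U X T k)))"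
    by (intro ld_Re) simp
  then show ?thesis by (simp add: acc_prob_Re)
qed

lemma qstate_norm:
  assumes "quantum_query_alg N m U Acc T" "t \<le> T"
  shows "(\<Sum>k<(N + 1) * m. (cmod (qstate N m U X t k))\<^sup>2) = 1"
  using assms(2)
proof (induction t)
  case 0
  have U0: "is_unitary ((N + 1) * m) (U 0)" using assms(1) by (simp add: quantum_query_alg_def)
  have D: "0 < (N + 1) * m" using assms(1) by (simp add: quantum_query_alg_def)
  have "(\<Sum>k<(N + 1) * m. (cmod (qstate N m U X 0 k))\<^sup>2)
      = (\<Sum>k<(N + 1) * m. (cmod (if k = 0 then 1 else 0 :: complex))\<^sup>2)"
    using unitary_norm[OF U0] by simp
  also have "\<dots> = (\<Sum>k<(N + 1) * m. if k = 0 then 1 else 0)" by (rule sum.cong) auto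
  also have "\<dots> = 1" using D by (simp add: sum.delta')
  finally show ?case .
next
  case (Suc t)
  have U: "is_unitary ((N + 1) * m) (U (Suc t))" using assms(1) Suc.prems by (simp add: quantum_query_alg_def)
  show ?case using unitary_norm[OF U] phase_norm Suc by simp
qed

lemma acc_bounds:
  assumes "quantum_query_alg N m U Acc T"
  shows "0 \<le> acc_prob N m U Acc T X" "acc_prob N m U Acc T X \<le> 1"
proof -
  show "0 \<le> acc_prob N m U Acc T X" by (simp add: acc_prob_def sum_nonneg)
  have A: "Acc \<subseteq> {..<(N + 1) * m}" using assms by (simp add: quantum_query_alg_def)
  have "acc_prob N m U Acc T X \<le> (\<Sum>k<(N + 1) * m. (cmod (qstate N m U X T k))\<^sup>2)"
    unfolding acc_prob_def using A by (intro sum_mono2) auto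
  also have "\<dots> = 1" by (rule qstate_norm[OF assms order.refl])
  finally show "acc_prob N m U Acc T X \<le> 1" .
qed

lemma const_bound:
  "9 ^ (2 * T) * (2 * real (2 * T) * 6 ^ (2 * T)) * (2 * real (2 * T) * 6 ^ (2 * T) + 1) \<le> (2::real) ^ (25 * T)"
proof (cases "T = 0")
  case True then show ?thesis by simp
next
  case False
  have T2: "real T \<le> 2 ^ T"
    using less_exp[of T] by (metis less_imp_le of_nat_le_iff of_nat_numeral of_nat_power)
  have e6: "(6::real) ^ (2 * T) = 36 ^ T" by (simp add: power_mult)
  have e9: "(9::real) ^ (2 * T) = 81 ^ T" by (simp add: power_mult)
  have x1: "2 * real (2 * T) * 6 ^ (2 * T) \<le> 4 * 72 ^ T"
  proof -
    have "2 * real (2 * T) * 6 ^ (2 * T) = 4 * (real T * 36 ^ T)" by (simp add: e6)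
    also have "\<dots> \<le> 4 * (2 ^ T * 36 ^ T)" using T2 by (intro mult_left_mono mult_right_mono) auto
    also have "\<dots> = 4 * 72 ^ T" by (simp add: power_mult_distrib[symmetric])
    finally show ?thesis .
  qed
  have one: "(1::real) \<le> 72 ^ T" by simp
  have x2: "2 * real (2 * T) * 6 ^ (2 * T) + 1 \<le> 5 * 72 ^ T" using x1 one by linarith
  have "9 ^ (2 * T) * (2 * real (2 * T) * 6 ^ (2 * T)) * (2 * real (2 * T) * 6 ^ (2 * T) + 1)
      \<le> 81 ^ T * (4 * 72 ^ T) * (5 * 72 ^ T)"
  proof -
    have m1: "81 ^ T * (2 * real (2 * T) * 6 ^ (2 * T)) \<le> 81 ^ T * (4 * 72 ^ T)"
      by (rule mult_left_mono[OF x1]) simp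
    show ?thesis unfolding e9 by (rule mult_mono[OF m1 x2]) simp_all
  qed
  also have "\<dots> = 20 * (81 * 72 * 72) ^ T"
  proof -
    have "(81 * 72 * 72 :: real) ^ T = 81 ^ T * 72 ^ T * 72 ^ T" by (simp only: power_mult_distrib)
    then show ?thesis by (simp only: mult_ac)
  qed
  also have "\<dots> \<le> 20 ^ T * (81 * 72 * 72) ^ T"
    using False by (intro mult_right_mono) (auto simp: self_le_power)
  also have "\<dots> = 8398080 ^ T" by (simp add: power_mult_distrib[symmetric])
  also have "\<dots> \<le> 33554432 ^ T" by (intro power_mono) auto
  also have "\<dots> = (2::real) ^ (25 * T)" by (simp add: power_mult)
  finally show ?thesis .
qed

theorem corollary24:
  shows "\<exists>C::real. C > 0 \<and>
    (\<forall>N m U Acc T (\<alpha>::real) (\<delta>::real).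
       quantum_query_alg N m U Acc T \<and> \<alpha> > 0 \<and> \<delta> > 0 \<longrightarrow>
       (\<exists>S g. nonadaptive_alg N S g \<and>
              real (card S) \<le> 2 powr (C * real T) / (\<alpha> ^ 4 * \<delta> ^ 4) \<and>
              real (card {X \<in> inputs N. \<bar>g X - acc_prob N m U Acc T X\<bar> \<le> \<alpha>})
                \<ge> (1 - \<delta>) * 2 ^ N))"
proof (intro exI[of _ 25] conjI allI impI)
  show "(0::real) < 25" by simp
  fix N m U Acc T and \<alpha> \<delta> :: real
  assume H: "quantum_query_alg N m U Acc T \<and> \<alpha> > 0 \<and> \<delta> > 0"
  then have Q: "quantum_query_alg N m U Acc T" and \<alpha>: "0 < \<alpha>" and \<delta>: "0 < \<delta>" by auto
  define f where "f X = acc_prob N m U Acc T X" for X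
  have fb: "0 \<le> f X" "f X \<le> 1" for X using acc_bounds[OF Q] by (auto simp: f_def)
  have pw: "2 powr (25 * real T) = (2::real) ^ (25 * T)"
    by (simp add: powr_realpow[symmetric])
  have B0: "0 \<le> 2 powr (25 * real T) / (\<alpha> ^ 4 * \<delta> ^ 4)" by simp
  have emptyS: "nonadaptive_alg N {} (\<lambda>_. c)" for c by (simp add: nonadaptive_alg_def)
  show "\<exists>S g. nonadaptive_alg N S g \<and>
              real (card S) \<le> 2 powr (25 * real T) / (\<alpha> ^ 4 * \<delta> ^ 4) \<and>
              real (card {X \<in> inputs N. \<bar>g X - acc_prob N m U Acc T X\<bar> \<le> \<alpha>})
                \<ge> (1 - \<delta>) * 2 ^ N"
  proof (cases "1 \<le> \<delta>")
    case True
    have "(1 - \<delta>) * 2 ^ N \<le> 0" using True by (simp add: mult_nonpos_nonneg)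
    then show ?thesis using emptyS[of 0] B0 by (intro exI[of _ "{}"] exI[of _ "\<lambda>_. 0"]) auto
  next
    case \<delta>1: False
    show ?thesis
    proof (cases "1 \<le> \<alpha>")
      case True
      have h: "\<bar>1 / 2 - f X\<bar> \<le> \<alpha>" for X
      proof -
        have "0 \<le> f X" "f X \<le> 1" by (rule fb)+
        then show ?thesis using True by (simp add: abs_le_iff)
      qed
      have all: "{X \<in> inputs N. \<bar>1 / 2 - acc_prob N m U Acc T X\<bar> \<le> \<alpha>} = inputs N"
        using h unfolding f_def by auto
      have "(1 - \<delta>) * 2 ^ N \<le> real (card (inputs N))"
        using \<delta> by (simp add: card_inputs)
      then show ?thesis using emptyS[of "1/2"] B0
        by (intro exI[of _ "{}"] exI[of _ "\<lambda>_. 1/2"]) (simp add: all)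
    next
      case \<alpha>1: False
      have finA: "finite Acc" using Q finite_subset by (auto simp: quantum_query_alg_def)
      have ldf: "ld N (int (2 * T)) f" using ld_acc[OF finA] by (simp add: f_def[abs_def])
      have bf: "\<bar>f Y\<bar> \<le> 1" for Y using fb[of Y] by simp
      obtain S g where Sg: "nonadaptive_alg N S g"
        "real (card S) \<le> 9 ^ (2 * T) * (2 * real (2 * T) * 6 ^ (2 * T)) * (2 * real (2 * T) * 6 ^ (2 * T) + 1) / (\<alpha>\<^sup>2 * \<delta>)"
        "(1 - \<delta>) * 2 ^ N \<le> real (card {X \<in> inputs N. \<bar>g X - f X\<bar> \<le> \<alpha>})"
        using junta_main[OF ldf bf \<alpha> \<delta>] by blast
      have ad: "\<alpha> ^ 4 * \<delta> ^ 4 \<le> \<alpha>\<^sup>2 * \<delta>"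
      proof -
        have "\<alpha> ^ 4 \<le> \<alpha>\<^sup>2" using \<alpha> \<alpha>1 by (simp add: power_decreasing)
        moreover have "\<delta> ^ 4 \<le> \<delta>" using \<delta> \<delta>1 by (metis less_eq_real_def not_le power_decreasing power_one_right zero_less_numeral one_le_numeral)
        ultimately show ?thesis using \<alpha> \<delta> by (intro mult_mono) auto
      qed
      have pos: "0 < \<alpha> ^ 4 * \<delta> ^ 4" using \<alpha> \<delta> by simp
      have "real (card S) \<le> 2 ^ (25 * T) / (\<alpha>\<^sup>2 * \<delta>)"
        using Sg(2) const_bound[of T] \<alpha> \<delta> by (meson divide_right_mono order.trans zero_le_mult_iff zero_less_power less_imp_le)
      also have "\<dots> \<le> 2 ^ (25 * T) / (\<alpha> ^ 4 * \<delta> ^ 4)"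
        using ad pos by (intro divide_left_mono) auto
      finally have cS: "real (card S) \<le> 2 powr (25 * real T) / (\<alpha> ^ 4 * \<delta> ^ 4)" unfolding pw .
      show ?thesis using Sg(1) cS Sg(3) unfolding f_def by blast
    qed
  qed
qed

end
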